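(* Assume the standing hypotheses (H). Then $d:=\sup\{\sqrt{x_1^2+x_2^2}:\ \mathbf{x}\in\operatorname{Supp}\rho\}<\infty$.
   Context: Standing hypotheses (H): $K\subset\mathbb{R}^3$ is a bounded axisymmetric domain (invariant under rotations about the $x_3$-axis) satisfying the no-trapping condition (whenever $(x,y,z)\notin K$, the half line $(x,y,z)+t(x,y,0)$, $t\ge0$, lies in $\mathbb{R}^3\setminus K$). $f:[0,\infty)\to[0,\infty)$ satisfies (F1) non-negative, continuous, strictly increasing for $s>0$; (F2) $\lim_{s\to0}f(s)s^{-4/3}=0$, $\lim_{s\to\infty}f(s)s^{-4/3}=\infty$; (F3) $\liminf_{s\to\infty}f(s)s^{-\gamma}>0$ for some $\gamma>4/3$; (F4) $f\in C^1(0,\infty)$ and $\liminf_{s\to0}f'(s)s^{-\mu}>0$ for some $\mu>0$. $A(s)=s\int_0^s\frac{f(t)}{t^2}dt$. For $q>3$, $\rho_K\in L^q(K)$ is non-negative and axisymmetric and $\Phi_K(\mathbf{x})=\int_K\frac{\rho_K(\mathbf{y})}{|\mathbf{x}-\mathbf{y}|}d\mathbf{y}$. $M>0$; $\Omega\ge1$ is a constant. For $\rho$ on $\mathbb{R}^3\setminus K$, $B\rho(\mathbf{x})=\int_{\mathbb{R}^3\setminus K}\frac{\rho(\mathbf{y})}{|\mathbf{x}-\mathbf{y}|}d\mathbf{y}$. $\rho:\mathbb{R}^3\setminus K\to[0,\infty)$ is bounded and continuous with $\int\rho=M$, and there is a constant $\lambda$ such that $A'(\rho)-B\rho-\frac12\Omega^2r^2-\Phi_K=\lambda$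 on $\{\rho>0\}$, where $r=\sqrt{x_1^2+x_2^2}$. *)

theory Defs
  imports "HOL-Analysis.Analysis" "HOL-Library.Liminf_Limsup"
begin

definition cyl_r :: "real^3 \<Rightarrow> real" where
  "cyl_r x = sqrt ((x$1)^2 + (x$2)^2)"

definition rot3 :: "real \<Rightarrow> real^3 \<Rightarrow> real^3" where
  "rot3 th x = vector [cos th * x$1 - sin th * x$2, sin th * x$1 + cos th * x$2, x$3]"

definition axisym_set :: "(real^3) set \<Rightarrow> bool" where
  "axisym_set S \<longleftrightarrow> (\<forall>th x. x \<in> S \<longleftrightarrow> rot3 th x \<in> S)"

definition axisym_fun_on :: "(real^3) set \<Rightarrow> (real^3 \<Rightarrow> real) \<Rightarrow> bool" where
  "axisym_fun_on S g \<longleftrightarrow> (\<forall>th x. x \<in> S \<longrightarrow> g (rot3 th x) = g x)"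

definition no_trapping :: "(real^3) set \<Rightarrow> bool" where
  "no_trapping K \<longleftrightarrow>
     (\<forall>x. x \<notin> K \<longrightarrow> (\<forall>t\<ge>0. x + t *\<^sub>R vector [x$1, x$2, 0] \<notin> K))"

definition Afun :: "(real \<Rightarrow> real) \<Rightarrow> real \<Rightarrow> real" where
  "Afun f s = s * integral {0..s} (\<lambda>t. f t / t^2)"

definition newton_pot :: "(real^3) set \<Rightarrow> (real^3 \<Rightarrow> real) \<Rightarrow> real^3 \<Rightarrow> real" where
  "newton_pot S g x = integral S (\<lambda>y. g y / dist x y)"

end

theory Submission
  imports Defs
begin



lemma g_int0:
  fixes f :: "real \<Rightarrow> real"
  assumes F1a: "\<forall>s\<ge>0. f s \<ge> 0" and F1b: "continuous_on {0..} f"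
    and d: "0 < d" "d \<le> 1" and bnd: "\<forall>t. 0 < t \<and> t \<le> d \<longrightarrow> f t / t powr (4/3) < 1"
  shows "(\<lambda>t. f t / t^2) integrable_on {0..d}"
proof -
  have cont: "continuous_on {0<..d} (\<lambda>t. f t / t^2)"
    by (intro continuous_intros continuous_on_subset[OF F1b]) auto
  have "(\<lambda>t. f t / t^2) absolutely_integrable_on {0<..d}"
  proof (rule measurable_bounded_by_integrable_imp_absolutely_integrable)
    show "(\<lambda>t. f t / t^2) \<in> borel_measurable (lebesgue_on {0<..d})"
      by (rule continuous_imp_measurable_on_sets_lebesgue[OF cont]) auto
    show "{0<..d} \<in> sets lebesgue" by auto
    show "(\<lambda>x. x powr (-2/3)) integrable_on {0<..d}"
      using integrable_on_powr_from_0'[of "-2/3" d] d by auto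
    fix t assume t: "t \<in> {0<..d}"
    then have t0: "t > 0" by auto
    have ft: "f t < t powr (4/3)" using bnd t t0 by (auto simp: field_simps)
    have "f t / t^2 \<le> t powr (4/3) / t^2" using ft t0 by (intro divide_right_mono) auto
    also have "t powr (4/3) / t^2 = t powr (-2/3)"
      using t0 by (simp add: powr_diff[symmetric] flip: powr_numeral) 
    finally show "norm (f t / t^2) \<le> t powr (-2/3)"
      using F1a t0 by auto
  qed
  then have "(\<lambda>t. f t / t^2) integrable_on {0<..d}" by (rule set_lebesgue_integral_eq_integral(1))
  then show ?thesis
    by (rule integrable_spike_set) (auto intro: negligible_subset[of "{0}"])
qed


lemma integral_nonneg_any:
  fixes h :: "real^3 \<Rightarrow> real"
  assumes "\<And>y. y \<in> S \<Longrightarrow> h y \<ge> 0"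
  shows "integral S h \<ge> 0"
proof (cases "h integrable_on S")
  case True then show ?thesis using assms by (intro integral_nonneg) auto
next
  case False then show ?thesis by (simp add: not_integrable_integral)
qed

lemma G_deriv:
  fixes g :: "real \<Rightarrow> real"
  assumes int: "\<And>s. s \<ge> 0 \<Longrightarrow> g integrable_on {0..s}"
    and cont: "continuous_on {0<..} g" and s: "s > 0"
  shows "((\<lambda>x. integral {0..x} g) has_real_derivative g s) (at s)"
proof -
  have "((\<lambda>x. integral {(s/2)..x} g) has_real_derivative g s) (at s within {(s/2)..(2 * s)})"
    using s by (intro integral_has_real_derivative continuous_on_subset[OF cont]) auto
  then have "((\<lambda>x. integral {(s/2)..x} g) has_real_derivative g s) (at s)"
    using s by (simp add: at_within_Icc_at)
  then have "((\<lambda>x. integral {0..(s/2)} g + integral {(s/2)..x} g) has_real_derivative g s) (at s)"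
    by (auto intro!: derivative_eq_intros)
  then show ?thesis
  proof (rule has_field_derivative_transform_within_open[where S="{s/2<..}"])
    show "open {s/2<..}" by auto
    show "s \<in> {s/2<..}" using s by auto
    fix x assume "x \<in> {s/2<..}"
    then show "integral {0..(s/2)} g + integral {(s/2)..x} g = integral {0..x} g"
      using s int[of x] by (intro Henstock_Kurzweil_Integration.integral_combine) auto
  qed
qed
theorem mainTheorem11:
  fixes K :: "(real^3) set" and f :: "real \<Rightarrow> real" and rhoK rho :: "real^3 \<Rightarrow> real"
    and q M \<Omega> \<gamma> \<mu> :: real
  assumes K_open: "open K" and K_conn: "connected K" and K_bdd: "bounded K"
    and K_axi: "axisym_set K" and K_notrap: "no_trapping K"
    and F1a: "\<forall>s\<ge>0. f s \<ge> 0" and F1b: "continuous_on {0..} f"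
    and F1c: "strict_mono_on {0<..} f"
    and F2a: "((\<lambda>s. f s / s powr (4/3)) \<longlongrightarrow> 0) (at_right 0)"
    and F2b: "filterlim (\<lambda>s. f s / s powr (4/3)) at_top at_top"
    and F3: "\<gamma> > 4/3" "Liminf at_top (\<lambda>s. ereal (f s * s powr (-\<gamma>))) > 0"
    and F4a: "\<forall>s>0. f differentiable (at s)" and F4b: "continuous_on {0<..} (deriv f)"
    and F4c: "\<mu> > 0" "Liminf (at_right 0) (\<lambda>s. ereal (deriv f s * s powr (-\<mu>))) > 0"
    and q: "q > 3"
    and rhoK_nonneg: "\<forall>y\<in>K. rhoK y \<ge> 0"
    and rhoK_Lq: "(\<lambda>y. rhoK y powr q) integrable_on K"
    and rhoK_axi: "axisym_fun_on K rhoK"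
    and M: "M > 0" and Om: "\<Omega> \<ge> 1"
    and rho_nonneg: "\<forall>x\<in>-K. rho x \<ge> 0"
    and rho_bdd: "bounded (rho ` (-K))"
    and rho_cont: "continuous_on (-K) rho"
    and rho_mass: "(rho has_integral M) (-K)"
    and EL: "\<exists>lam. \<forall>x\<in>-K. rho x > 0 \<longrightarrow>
               deriv (Afun f) (rho x) - newton_pot (-K) rho x - 1/2 * \<Omega>^2 * (cyl_r x)^2
                 - newton_pot K rhoK x = lam"
  shows "bdd_above (cyl_r ` closure {x\<in>-K. rho x > 0})"
  proof -
  define g where "g = (\<lambda>t. f t / t^2)"
  have ev: "eventually (\<lambda>s. f s / s powr (4/3) < 1) (at_right 0)"
    using order_tendstoD(2)[OF F2a, of 1] by simp
  then obtain b where b: "b > 0" "\<forall>y>0. y < b \<longrightarrow> f y / y powr (4/3) < 1"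
    unfolding eventually_at_right_field by auto
  define d where "d = min 1 (b/2)"
  have d: "0 < d" "d \<le> 1" "\<forall>t. 0 < t \<and> t \<le> d \<longrightarrow> f t / t powr (4/3) < 1"
    using b unfolding d_def by auto
  have gd: "g integrable_on {0..d}"
    unfolding g_def by (rule g_int0[OF F1a F1b d])
  have gcont: "continuous_on {0<..} g"
    unfolding g_def by (intro continuous_intros continuous_on_subset[OF F1b]) auto
  have gint: "g integrable_on {0..s}" if "s \<ge> 0" for s
  proof (cases "s \<le> d")
    case True then show ?thesis using gd that by (auto intro: integrable_on_subinterval)
  next
    case False
    have "g integrable_on {d..s}"
      using d by (intro integrable_continuous_interval continuous_on_subset[OF gcont]) auto
    then show ?thesis using False d gd
      by (intro Henstock_Kurzweil_Integration.integrable_combine[of 0 d s]) auto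
  qed
  have gnn: "g t \<ge> 0" if "t \<ge> 0" for t
    unfolding g_def using F1a that by auto
  have dA: "deriv (Afun f) s = integral {0..s} g + f s / s" if s: "s > 0" for s
  proof -
    have "((\<lambda>x. integral {0..x} g) has_real_derivative g s) (at s)"
      by (rule G_deriv[OF gint gcont s])
    then have "((\<lambda>x. x * integral {0..x} g) has_real_derivative (1 * integral {0..s} g + g s * s)) (at s)"
      by (rule DERIV_mult[OF DERIV_ident])
    moreover have "Afun f = (\<lambda>x. x * integral {0..x} g)"
      unfolding Afun_def g_def by auto
    moreover have "g s * s = f s / s" unfolding g_def using s by (simp add: power2_eq_square)
    ultimately show ?thesis using DERIV_imp_deriv by fastforce
  qed
  obtain R where R: "\<forall>x\<in>-K. \<bar>rho x\<bar> \<le> R"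
    using rho_bdd unfolding bounded_real by auto
  define R1 where "R1 = max R 1"
  define C where "C = integral {0..R1} g + max 1 (f R1 / d)"
  have Cb: "deriv (Afun f) s \<le> C" if s: "0 < s" "s \<le> R1" for s
  proof -
    have "integral {0..s} g \<le> integral {0..R1} g"
      using s gint[of s] gint[of R1] gnn by (intro integral_subset_le) auto
    moreover have "f s / s \<le> max 1 (f R1 / d)"
    proof (cases "s < d")
      case True
      have "f s < s powr (4/3)" using d(3) True s by (auto simp: field_simps)
      also have "s powr (4/3) = s * s powr (1/3)"
        proof -
        have "s powr (4/3) = s powr (1 + 1/3)" by simp
        also have "\<dots> = s * s powr (1/3)" unfolding powr_add using s by simp
        finally show ?thesis .
      qed
      also have "\<dots> \<le> s * 1"
        using s True d powr_mono2[of "1/3" s 1] by (intro mult_left_mono) auto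
      finally have "f s < s" by simp
      then have "f s / s < 1" using s by (simp add: divide_less_eq)
      then show ?thesis by (auto simp: le_max_iff_disj)
    next
      case False
      have "f s \<le> f R1"
      proof (cases "s = R1")
        case False then show ?thesis
          using F1c s unfolding strict_mono_on_def by (auto intro: less_imp_le)
      qed simp
      then have "f s / s \<le> f R1 / s" using s by (intro divide_right_mono) auto
      also have "\<dots> \<le> f R1 / d" using False s d F1a R1_def
        by (intro divide_left_mono) auto
      finally show ?thesis by auto
    qed
    ultimately show ?thesis using dA[OF s(1)] unfolding C_def by linarith
  qed
  obtain lam where lam: "\<forall>x\<in>-K. rho x > 0 \<longrightarrow>
               deriv (Afun f) (rho x) - newton_pot (-K) rho x - 1/2 * \<Omega>^2 * (cyl_r x)^2
                 - newton_pot K rhoK x = lam" using EL by auto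
  define D where "D = sqrt (2 * (C - lam))"
  have bnd: "cyl_r x \<le> D" if x: "x \<in> -K" "rho x > 0" for x
  proof -
    have n1: "newton_pot (-K) rho x \<ge> 0"
      unfolding newton_pot_def using rho_nonneg by (intro integral_nonneg_any) auto
    have n2: "newton_pot K rhoK x \<ge> 0"
      unfolding newton_pot_def using rhoK_nonneg by (intro integral_nonneg_any) auto
    have "rho x \<le> R1" using R x unfolding R1_def by force
    then have c: "deriv (Afun f) (rho x) \<le> C" using Cb x by auto
    have e: "1/2 * \<Omega>^2 * (cyl_r x)^2 \<le> C - lam" using lam x n1 n2 c by force
    have "(cyl_r x)^2 \<le> \<Omega>^2 * (cyl_r x)^2"
      proof -
      have o: "1 \<le> \<Omega>^2" using Om by (rule one_le_power)
      show ?thesis using mult_right_mono[OF o zero_le_power2[of "cyl_r x"]] by simp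
    qed
    then have "(cyl_r x)^2 \<le> 2 * (C - lam)" using e by (simp add: field_simps)
    then show ?thesis unfolding D_def by (rule real_le_rsqrt)
  qed
  have cl: "closed {x. cyl_r x \<le> D}"
    unfolding cyl_r_def by (intro closed_Collect_le continuous_intros)
  have "closure {x\<in>-K. rho x > 0} \<subseteq> {x. cyl_r x \<le> D}"
    using bnd by (intro closure_minimal[OF _ cl]) auto
  then show ?thesis unfolding bdd_above_def by auto
qed

end
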